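(* Let $A\in\mathbb{C}^{N\times N}$, let $\mu\in\mathbb{C}$, and let $\tilde A=A-\mu I$ have singular value decomposition $\tilde A=\sum_j\tilde\sigma_j|u_j\rangle\langle v_j|$ (right singular vectors $|v_j\rangle$). For $\varepsilon>0$ let $\Pi^{(\tilde A)}_{\varepsilon}=\sum_{j:\tilde\sigma_j\leq\varepsilon}|v_j\rangle\langle v_j|$. Let $(\lambda,|v\rangle)$ be any eigenvalue–eigenvector pair of $A$ with $\||v\rangle\|=1$, let $|\psi\rangle$ be any unit vector, and let $\gamma>0$. If $|\langle v|\psi\rangle|\geq2\gamma$ and $|\mu-\lambda|\leq\varepsilon\gamma$, then $\left\|\Pi^{(\tilde A)}_{\varepsilon}|\psi\rangle\right\|\geq\gamma$. *)

theory Defs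
  imports "HOL-Analysis.Analysis"
begin

text \<open>Vectors in C^N are modelled as complex^'n (N = CARD('n)), N x N matrices as
complex^'n^'n. The Hermitian inner product <x|y> is conjugate-linear in x.\<close>

definition cinner :: "complex^'n \<Rightarrow> complex^'n \<Rightarrow> complex" where
  "cinner x y = (\<Sum>i\<in>UNIV. cnj (x $ i) * y $ i)"

definition outer :: "complex^'n \<Rightarrow> complex^'n \<Rightarrow> complex^'n^'n" where
  "outer x y = (\<chi> i k. x $ i * cnj (y $ k))"

definition orthonormal_family :: "('j \<Rightarrow> complex^'n) \<Rightarrow> bool" where
  "orthonormal_family e \<longleftrightarrow> (\<forall>j k. cinner (e j) (e k) = (if j = k then 1 else 0))"

definition is_svd :: "complex^'n^'n \<Rightarrow> ('n \<Rightarrow> real) \<Rightarrow> ('n \<Rightarrow> complex^'n) \<Rightarrow> ('n \<Rightarrow> complex^'n) \<Rightarrow> bool" where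
  "is_svd M \<sigma> u v \<longleftrightarrow> (\<forall>j. \<sigma> j \<ge> 0) \<and> orthonormal_family u \<and> orthonormal_family v \<and>
     M = (\<Sum>j\<in>UNIV. outer (complex_of_real (\<sigma> j) *s u j) (v j))"

definition svd_proj :: "real \<Rightarrow> ('n \<Rightarrow> real) \<Rightarrow> ('n \<Rightarrow> complex^'n) \<Rightarrow> complex^'n^'n" where
  "svd_proj \<epsilon> \<sigma> v = (\<Sum>j\<in>{j. \<sigma> j \<le> \<epsilon>}. outer (v j) (v j))"

end

theory Submission
  imports Defs
begin

lemma cinner_sum_right: "cinner x (\<Sum>j\<in>S. f j) = (\<Sum>j\<in>S. cinner x (f j))"
  unfolding cinner_def sum_component by (simp add: sum_distrib_left sum.swap[of _ S])

lemma cinner_sum_left: "cinner (\<Sum>j\<in>S. f j) x = (\<Sum>j\<in>S. cinner (f j) x)"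
  unfolding cinner_def sum_component by (simp add: sum_distrib_right sum.swap[of _ S])

lemma cinner_scale_right: "cinner x (a *s y) = a * cinner x y"
  unfolding cinner_def by (simp add: sum_distrib_left algebra_simps)

lemma cinner_scale_left: "cinner (a *s x) y = cnj a * cinner x y"
  unfolding cinner_def by (simp add: sum_distrib_left algebra_simps)

lemma cinner_add_right: "cinner x (y + z) = cinner x y + cinner x z"
  unfolding cinner_def by (simp add: sum.distrib algebra_simps)

lemma cinner_cnj: "cnj (cinner x y) = cinner y x"
  unfolding cinner_def by (simp add: mult.commute)

lemma cinner_self: "cinner x x = of_real ((norm x)^2)"
proof -
  have "(norm x)^2 = (\<Sum>i\<in>UNIV. (norm (x$i))^2)"
    unfolding norm_vec_def L2_set_def by (simp add: sum_nonneg)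
  have "cinner x x = (\<Sum>i\<in>UNIV. of_real ((norm (x$i))^2))"
    unfolding cinner_def by (intro sum.cong refl) (metis complex_norm_square mult.commute of_real_power)
  also have "\<dots> = of_real (\<Sum>i\<in>UNIV. (norm (x$i))^2)" by simp
  finally show ?thesis using \<open>(norm x)^2 = _\<close> by simp
qed

lemma cinner_CS: "norm (cinner x y) \<le> norm x * norm y"
proof -
  have "norm (cinner x y) \<le> (\<Sum>i\<in>UNIV. norm (cnj (x$i) * y$i))"
    unfolding cinner_def by (rule norm_sum)
  also have "\<dots> = (\<Sum>i\<in>UNIV. \<bar>norm (x$i)\<bar> * \<bar>norm (y$i)\<bar>)"
    by (simp add: norm_mult)
  also have "\<dots> \<le> L2_set (\<lambda>i. norm (x$i)) UNIV * L2_set (\<lambda>i. norm (y$i)) UNIV"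
    by (rule L2_set_mult_ineq)
  finally show ?thesis unfolding norm_vec_def .
qed

lemma ortho_sum:
  fixes e :: "'j::finite \<Rightarrow> complex^'n"
  assumes "orthonormal_family e"
  shows "cinner (\<Sum>j\<in>S. a j *s e j) (\<Sum>k\<in>S. b k *s e k) = (\<Sum>j\<in>S. cnj (a j) * b j)"
proof -
  have "cinner (\<Sum>j\<in>S. a j *s e j) (\<Sum>k\<in>S. b k *s e k)
      = (\<Sum>j\<in>S. cnj (a j) * (\<Sum>k\<in>S. b k * cinner (e j) (e k)))"
    apply (simp add: cinner_sum_left cinner_sum_right cinner_scale_left cinner_scale_right
        sum_distrib_left)
    apply (subst sum.swap) apply (simp add: mult_ac)
    done
  also have "\<dots> = (\<Sum>j\<in>S. cnj (a j) * (\<Sum>k\<in>S. b k * (if j = k then 1 else 0)))"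
    using assms unfolding orthonormal_family_def by simp
  also have "\<dots> = (\<Sum>j\<in>S. cnj (a j) * b j)"
    by (simp add: if_distrib cong: if_cong)
  finally show ?thesis .
qed

lemma complete:
  fixes v :: "'n::finite \<Rightarrow> complex^'n"
  assumes "orthonormal_family v"
  shows "x = (\<Sum>j\<in>UNIV. cinner (v j) x *s v j)"
proof -
  define V :: "complex^'n^'n" where "V = (\<chi> j i. cnj (v j $ i))"
  define W :: "complex^'n^'n" where "W = (\<chi> i j. v j $ i)"
  have "V ** W = mat 1"
    using assms unfolding orthonormal_family_def
    by (simp add: vec_eq_iff matrix_matrix_mult_def V_def W_def mat_def cinner_def)
  then have "W ** V = mat 1" using matrix_left_right_inverse by blast
  then have WV: "(\<Sum>j\<in>UNIV. v j $ i * cnj (v j $ k)) = (if i = k then 1 else 0)" for i k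
    by (simp add: vec_eq_iff matrix_matrix_mult_def V_def W_def mat_def)
  show ?thesis
  proof (subst vec_eq_iff, intro allI)
    fix i
    have "(\<Sum>j\<in>UNIV. cinner (v j) x *s v j) $ i
        = (\<Sum>j\<in>UNIV. \<Sum>k\<in>UNIV. v j $ i * cnj (v j $ k) * x $ k)"
      unfolding sum_component cinner_def
      by (simp add: sum_distrib_left sum_distrib_right mult_ac)
    also have "\<dots> = (\<Sum>k\<in>UNIV. (\<Sum>j\<in>UNIV. v j $ i * cnj (v j $ k)) * x $ k)"
      by (subst sum.swap) (simp add: sum_distrib_right)
    also have "\<dots> = (\<Sum>k\<in>UNIV. if k = i then x $ k else 0)"
      by (rule sum.cong) (auto simp: WV)
    also have "\<dots> = x $ i" by simp
    finally show "x $ i = (\<Sum>j\<in>UNIV. cinner (v j) x *s v j) $ i" by simp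
  qed
qed

lemma outer_mult: "outer a b *v x = cinner b x *s a"
  unfolding outer_def cinner_def matrix_vector_mult_def
  by (simp add: vec_eq_iff sum_distrib_left mult_ac)

lemma sum_mat_mult: "(\<Sum>j\<in>S. M j) *v (x::'a::comm_ring_1^'n) = (\<Sum>j\<in>S. M j *v x)"
  unfolding matrix_vector_mult_def
  by (simp add: vec_eq_iff sum_component sum_distrib_right sum.swap[of _ S])

lemma mat_mult: "mat (c::'a::comm_ring_1) *v x = c *s x"
proof (subst vec_eq_iff, intro allI)
  fix i
  have "(mat c *v x) $ i = (\<Sum>j\<in>UNIV. (mat c) $ i $ j * x $ j)"
    unfolding matrix_vector_mult_def by simp
  also have "\<dots> = (\<Sum>j\<in>UNIV. if j = i then c * x $ j else 0)"
    by (rule sum.cong) (auto simp: mat_def)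
  finally show "(mat c *v x) $ i = (c *s x) $ i" by simp
qed

lemma cn: "cnj z * z = of_real ((norm z)^2)"
  by (metis complex_norm_square mult.commute of_real_power)

lemma cn2: "cnj (of_real s * z) * (of_real s * z) = of_real (s^2 * (norm z)^2)"
proof -
  have "cnj (of_real s * z) * (of_real s * z) = of_real (s^2) * (cnj z * z)"
    by (simp add: power2_eq_square mult_ac)
  also have "\<dots> = of_real (s^2 * (norm z)^2)" unfolding cn by simp
  finally show ?thesis .
qed

theorem lemma2:
  fixes A :: "complex^'n^'n" and \<mu> lam :: complex and \<epsilon> \<gamma> :: real
    and \<sigma> :: "'n \<Rightarrow> real" and u v :: "'n \<Rightarrow> complex^'n" and w \<psi> :: "complex^'n"
  assumes svd: "is_svd (A - mat \<mu>) \<sigma> u v"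
    and eps: "\<epsilon> > 0"
    and eig: "A *v w = lam *s w" and wnorm: "norm w = 1"
    and psinorm: "norm \<psi> = 1"
    and gam: "\<gamma> > 0"
    and overlap: "norm (cinner w \<psi>) \<ge> 2 * \<gamma>"
    and close: "norm (\<mu> - lam) \<le> \<epsilon> * \<gamma>"
  shows "norm (svd_proj \<epsilon> \<sigma> v *v \<psi>) \<ge> \<gamma>"
proof -
  define c where "c j = cinner (v j) w" for j
  define d where "d j = cinner (v j) \<psi>" for j
  define P where "P = {j. \<sigma> j \<le> \<epsilon>}"
  define Q where "Q = UNIV - P"
  have sig0: "\<And>j. \<sigma> j \<ge> 0" and ou: "orthonormal_family u" and ov: "orthonormal_family v"
    and Aeq: "A - mat \<mu> = (\<Sum>j\<in>UNIV. outer (complex_of_real (\<sigma> j) *s u j) (v j))"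
    using svd unfolding is_svd_def by auto
  have h1: "(A - mat \<mu>) *v w = (lam - \<mu>) *s w"
    by (simp add: matrix_vector_mult_diff_rdistrib eig mat_mult algebra_simps)
  have h2: "(A - mat \<mu>) *v w = (\<Sum>j\<in>UNIV. (of_real (\<sigma> j) * c j) *s u j)"
    unfolding Aeq sum_mat_mult outer_mult c_def by (simp add: mult.commute)
  have ww: "cinner w w = 1" using wnorm cinner_self[of w] by simp
  have "cinner ((lam - \<mu>) *s w) ((lam - \<mu>) *s w) = of_real ((norm (lam - \<mu>))^2)"
    unfolding cinner_scale_left cinner_scale_right ww mult_1_right
    by (metis complex_norm_square mult.commute of_real_power)
  moreover have "cinner (\<Sum>j\<in>UNIV. (of_real (\<sigma> j) * c j) *s u j) (\<Sum>j\<in>UNIV. (of_real (\<sigma> j) * c j) *s u j)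
      = (\<Sum>j\<in>UNIV. of_real ((\<sigma> j)^2 * (norm (c j))^2))"
    unfolding ortho_sum[OF ou]
    by (intro sum.cong refl) (rule cn2)
  ultimately have "(\<Sum>j\<in>UNIV. complex_of_real ((\<sigma> j)^2 * (norm (c j))^2)) = of_real ((norm (lam - \<mu>))^2)"
    using h1 h2 by simp
  then have sumeq: "(\<Sum>j\<in>UNIV. (\<sigma> j)^2 * (norm (c j))^2) = (norm (lam - \<mu>))^2"
    by (simp only: of_real_sum[symmetric] of_real_eq_iff)
  have "norm (lam - \<mu>) \<le> \<epsilon> * \<gamma>" using close by (simp add: norm_minus_commute)
  then have nl: "(norm (lam - \<mu>))^2 \<le> (\<epsilon> * \<gamma>)^2" by (simp add: power_mono)
  have "\<epsilon>^2 * (\<Sum>j\<in>Q. (norm (c j))^2) = (\<Sum>j\<in>Q. \<epsilon>^2 * (norm (c j))^2)"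
    by (simp add: sum_distrib_left)
  also have "\<dots> \<le> (\<Sum>j\<in>Q. (\<sigma> j)^2 * (norm (c j))^2)"
  proof (rule sum_mono)
    fix j assume "j \<in> Q"
    then have "\<epsilon> < \<sigma> j" unfolding Q_def P_def by auto
    then have "\<epsilon>^2 \<le> (\<sigma> j)^2" using eps by (simp add: power_mono)
    then show "\<epsilon>^2 * (norm (c j))^2 \<le> (\<sigma> j)^2 * (norm (c j))^2" by (simp add: mult_right_mono)
  qed
  also have "\<dots> \<le> (\<Sum>j\<in>UNIV. (\<sigma> j)^2 * (norm (c j))^2)"
    by (rule sum_mono2) auto
  also have "\<dots> \<le> \<epsilon>^2 * \<gamma>^2" using sumeq nl by (simp add: power_mult_distrib)
  finally have "\<epsilon>^2 * (\<Sum>j\<in>Q. (norm (c j))^2) \<le> \<epsilon>^2 * \<gamma>^2" .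
  then have sQ: "(\<Sum>j\<in>Q. (norm (c j))^2) \<le> \<gamma>^2" using eps by simp
  define Pp where "Pp = (\<Sum>j\<in>P. d j *s v j)"
  define Qp where "Qp = (\<Sum>j\<in>Q. d j *s v j)"
  define Qw where "Qw = (\<Sum>j\<in>Q. c j *s v j)"
  have Ppeq: "svd_proj \<epsilon> \<sigma> v *v \<psi> = Pp"
    unfolding svd_proj_def sum_mat_mult outer_mult Pp_def d_def P_def by simp
  have "of_real ((norm Qw)^2) = cinner Qw Qw" by (simp add: cinner_self)
  also have "\<dots> = (\<Sum>j\<in>Q. of_real ((norm (c j))^2))"
    unfolding Qw_def ortho_sum[OF ov]
    by (intro sum.cong refl) (rule cn)
  finally have "(norm Qw)^2 = (\<Sum>j\<in>Q. (norm (c j))^2)"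
    by (simp only: of_real_sum[symmetric] of_real_eq_iff)
  with sQ have "(norm Qw)^2 \<le> \<gamma>^2" by simp
  then have nQw: "norm Qw \<le> \<gamma>" using gam power2_le_imp_le by fastforce
  have "\<psi> = (\<Sum>j\<in>UNIV. d j *s v j)" unfolding d_def by (rule complete[OF ov])
  also have "\<dots> = Qp + Pp" unfolding Qp_def Pp_def Q_def
    by (rule sum.subset_diff) auto
  finally have psi: "\<psi> = Qp + Pp" .
  have "cinner w Qp = (\<Sum>j\<in>Q. d j * cinner w (v j))"
    unfolding Qp_def by (simp add: cinner_sum_right cinner_scale_right)
  also have "\<dots> = (\<Sum>j\<in>Q. cnj (c j) * d j)"
    unfolding c_def by (intro sum.cong refl) (simp add: cinner_cnj mult.commute)
  also have "\<dots> = cinner Qw \<psi>"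
    unfolding Qw_def d_def by (simp add: cinner_sum_left cinner_scale_left)
  finally have wQ: "cinner w Qp = cinner Qw \<psi>" .
  have "2 * \<gamma> \<le> norm (cinner w \<psi>)" by (rule overlap)
  also have "\<dots> = norm (cinner Qw \<psi> + cinner w Pp)"
    by (subst psi) (simp add: cinner_add_right wQ)
  also have "\<dots> \<le> norm (cinner Qw \<psi>) + norm (cinner w Pp)" by (rule norm_triangle_ineq)
  also have "\<dots> \<le> norm Qw * norm \<psi> + norm w * norm Pp"
    by (intro add_mono cinner_CS)
  also have "\<dots> \<le> \<gamma> + norm Pp" using nQw psinorm wnorm by simp
  finally show ?thesis using Ppeq by simp
qed

end
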